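(* Let $k \geq 3$ and let $G$ be a diregular $(2,k,+3)$-digraph. Then $G$ contains a pair of distinct vertices $u,v$ with exactly one common out-neighbour, i.e. $|N^+(u)\cap N^+(v)|=1$.
   Context: A digraph $G$ is $k$-geodetic if for every ordered pair of (not necessarily distinct) vertices $x,y$ there is at most one directed path from $x$ to $y$ of length at most $k$ (the trivial path of length $0$ counts, so there are no directed cycles of length at most $k$). $M(d,k)=1+d+\dots+d^k$. A $(d,k,+\epsilon)$-digraph is a $k$-geodetic digraph with minimum out-degree $d$ and order $M(d,k)+\epsilon$; it is diregular if every vertex has in-degree and out-degree exactly $d$. $N^+(x)$ denotes the set of out-neighbours of $x$. *)

theory Defs
  imports Main
begin

definition digraph :: "'a set \<Rightarrow> ('a \<Rightarrow> 'a \<Rightarrow> bool) \<Rightarrow> bool" where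
  "digraph V E \<longleftrightarrow> finite V \<and> (\<forall>x y. E x y \<longrightarrow> x \<in> V \<and> y \<in> V)"

definition out_nbrs :: "('a \<Rightarrow> 'a \<Rightarrow> bool) \<Rightarrow> 'a \<Rightarrow> 'a set" where
  "out_nbrs E x = {y. E x y}"

definition in_nbrs :: "('a \<Rightarrow> 'a \<Rightarrow> bool) \<Rightarrow> 'a \<Rightarrow> 'a set" where
  "in_nbrs E x = {y. E y x}"

text \<open>A directed walk from x to y, given as its vertex list; its length is length p - 1.\<close>
definition dwalk :: "('a \<Rightarrow> 'a \<Rightarrow> bool) \<Rightarrow> 'a list \<Rightarrow> 'a \<Rightarrow> 'a \<Rightarrow> bool" where
  "dwalk E p x y \<longleftrightarrow> p \<noteq> [] \<and> hd p = x \<and> last p = y \<and>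
     (\<forall>i. Suc i < length p \<longrightarrow> E (p ! i) (p ! Suc i))"

text \<open>k-geodetic: for all (not necessarily distinct) x, y in V there is at most one
  directed walk of length at most k from x to y (the trivial walk counts).\<close>
definition k_geodetic :: "'a set \<Rightarrow> ('a \<Rightarrow> 'a \<Rightarrow> bool) \<Rightarrow> nat \<Rightarrow> bool" where
  "k_geodetic V E k \<longleftrightarrow> (\<forall>x\<in>V. \<forall>y\<in>V. \<forall>p q.
     dwalk E p x y \<and> length p \<le> k + 1 \<and> dwalk E q x y \<and> length q \<le> k + 1 \<longrightarrow> p = q)"

definition moore_bound :: "nat \<Rightarrow> nat \<Rightarrow> nat" where
  "moore_bound d k = (\<Sum>i\<le>k. d ^ i)"

definition diregular_dk_eps :: "'a set \<Rightarrow> ('a \<Rightarrow> 'a \<Rightarrow> bool) \<Rightarrow> nat \<Rightarrow> nat \<Rightarrow> nat \<Rightarrow> bool" where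
  "diregular_dk_eps V E d k eps \<longleftrightarrow> digraph V E \<and> k_geodetic V E k \<and>
     (\<forall>x\<in>V. card (out_nbrs E x) = d \<and> card (in_nbrs E x) = d) \<and>
     card V = moore_bound d k + eps"

end

theory Submission
  imports Defs
begin

lemma mem_out[simp]: "y \<in> out_nbrs E x \<longleftrightarrow> E x y" by (simp add: out_nbrs_def)
lemma mem_in[simp]: "y \<in> in_nbrs E x \<longleftrightarrow> E y x" by (simp add: in_nbrs_def)

lemma two_elem: "finite A \<Longrightarrow> card A = 2 \<Longrightarrow> a \<in> A \<Longrightarrow> \<exists>b. b \<noteq> a \<and> A = {a,b}"
proof -
  assume A: "finite A" "card A = 2" "a \<in> A"
  then have "card (A - {a}) = 1" by simp
  then obtain b where b: "A - {a} = {b}" by (auto simp: card_Suc_eq)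
  then show ?thesis using A(3) by (intro exI[of _ b]) auto
qed

lemma nonempty2: "card A = 2 \<Longrightarrow> \<exists>a. a \<in> A"
  by (metis card.empty equals0I zero_neq_numeral)

lemma dwalk_single: "dwalk E [a] a a" by (simp add: dwalk_def)

lemma dwalk_snoc: assumes "dwalk E p a b" "E b c" shows "dwalk E (p @ [c]) a c"
proof -
  have ne: "p \<noteq> []" and h: "hd p = a" and l: "last p = b"
    and st: "\<forall>i. Suc i < length p \<longrightarrow> E (p!i) (p!Suc i)" using assms(1) by (auto simp: dwalk_def)
  have "E ((p@[c])!i) ((p@[c])!Suc i)" if "Suc i < length (p@[c])" for i
  proof (cases "Suc i < length p")
    case True then show ?thesis using st by (simp add: nth_append)
  next
    case False
    with that have i: "Suc i = length p" by simp
    then have "i = length p - 1" by simp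
    then have "(p@[c])!i = last p" using ne by (simp add: nth_append last_conv_nth)
    moreover have "(p@[c])!Suc i = c" using i by (simp add: nth_append)
    ultimately show ?thesis using l assms(2) by simp
  qed
  then show ?thesis using ne h by (simp add: dwalk_def)
qed

lemma dwalk_snocD: assumes "dwalk E (p @ [c]) a d" "p \<noteq> []"
  shows "dwalk E p a (last p) \<and> E (last p) c \<and> d = c"
proof -
  have h: "hd p = a" and d: "d = c" using assms by (auto simp: dwalk_def)
  have st: "\<And>i. Suc i < Suc (length p) \<Longrightarrow> E ((p@[c])!i) ((p@[c])!Suc i)"
    using assms(1) by (auto simp: dwalk_def)
  have "E (p!i) (p!Suc i)" if "Suc i < length p" for i
    using st[of i] that by (simp add: nth_append)
  moreover have "E (last p) c"
  proof -
    have "Suc (length p - 1) < Suc (length p)" using assms(2) by simp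
    from st[OF this] show ?thesis using assms(2) by (simp add: nth_append last_conv_nth)
  qed
  ultimately show ?thesis using h d assms(2) by (simp add: dwalk_def)
qed

lemma dwalk_Cons: assumes "E a (hd p)" "dwalk E p (hd p) d" shows "dwalk E (a # p) a d"
proof -
  have ne: "p \<noteq> []" using assms(2) by (simp add: dwalk_def)
  have "E ((a#p)!i) ((a#p)!Suc i)" if "Suc i < length (a#p)" for i
  proof (cases i)
    case 0 then show ?thesis using assms(1) ne by (simp add: hd_conv_nth)
  next
    case (Suc j) then show ?thesis using that assms(2) by (simp add: dwalk_def)
  qed
  then show ?thesis using assms ne by (simp add: dwalk_def)
qed

lemma dwalk_ConsD: assumes "dwalk E (a # p) a' d" "p \<noteq> []"
  shows "a' = a \<and> E a (hd p) \<and> dwalk E p (hd p) d"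
proof -
  have st: "\<And>i. Suc i < Suc (length p) \<Longrightarrow> E ((a#p)!i) ((a#p)!Suc i)"
    using assms(1) by (auto simp: dwalk_def)
  have "E a (hd p)" using st[of 0] assms(2) by (simp add: hd_conv_nth)
  moreover have "E (p!i) (p!Suc i)" if "Suc i < length p" for i
    using st[of "Suc i"] that by simp
  ultimately show ?thesis using assms by (simp add: dwalk_def)
qed

locale kg =
  fixes V :: "'a set" and E :: "'a \<Rightarrow> 'a \<Rightarrow> bool" and k :: nat
  assumes dg: "digraph V E" and geo: "k_geodetic V E k"
    and outd: "\<And>x. x \<in> V \<Longrightarrow> card (out_nbrs E x) = 2"
    and ind: "\<And>x. x \<in> V \<Longrightarrow> card (in_nbrs E x) = 2"
    and k3: "3 \<le> k"
begin

lemma finV: "finite V" using dg by (simp add: digraph_def)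
lemma arcV: "E a b \<Longrightarrow> a \<in> V \<and> b \<in> V" using dg by (simp add: digraph_def)
lemma fin_out: "finite (out_nbrs E x)"
  by (rule finite_subset[OF _ finV]) (auto dest: arcV)
lemma fin_in: "finite (in_nbrs E x)"
  by (rule finite_subset[OF _ finV]) (auto dest: arcV)

lemma dwalk_last_V: assumes "dwalk E p a b" "a \<in> V" shows "b \<in> V"
proof (cases "length p = 1")
  case True
  then obtain c where "p = [c]" by (cases p) auto
  with assms show ?thesis by (auto simp: dwalk_def)
next
  case False
  have "p \<noteq> []" using assms by (simp add: dwalk_def)
  then have "length p \<noteq> 0" by simp
  with False have len: "2 \<le> length p" by linarith
  then have "Suc (length p - 2) < length p" by simp
  with assms have "E (p ! (length p - 2)) (p ! Suc (length p - 2))" by (simp add: dwalk_def)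
  moreover have "Suc (length p - 2) = length p - 1" using len by simp
  moreover have "b = p ! (length p - 1)" using assms len by (auto simp: dwalk_def last_conv_nth)
  ultimately show ?thesis using arcV by auto
qed

lemma uniq: assumes "dwalk E p a b" "dwalk E q a b" "length p \<le> Suc k" "length q \<le> Suc k" "a \<in> V"
  shows "p = q"
proof -
  have "b \<in> V" using dwalk_last_V assms by blast
  then show ?thesis using geo assms unfolding k_geodetic_def by auto
qed

lemma closed: "dwalk E p c c \<Longrightarrow> 2 \<le> length p \<Longrightarrow> length p \<le> Suc k \<Longrightarrow> c \<in> V \<Longrightarrow> False"
  using uniq[OF _ dwalk_single, of p c] by auto

lemma w2: "E a b \<Longrightarrow> dwalk E [a,b] a b"
  using dwalk_snoc[OF dwalk_single] by fastforce
lemma w3: "E a b \<Longrightarrow> E b c \<Longrightarrow> dwalk E [a,b,c] a c"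
  using dwalk_snoc[OF w2] by fastforce
lemma w4: "E a b \<Longrightarrow> E b c \<Longrightarrow> E c d \<Longrightarrow> dwalk E [a,b,c,d] a d"
  using dwalk_snoc[OF w3] by fastforce

lemma noloop: "E a a \<Longrightarrow> False"
  using closed[OF w2] k3 arcV by fastforce


definition Dset where "Dset j x = {z. \<exists>p. dwalk E p x z \<and> length p = Suc j}"
definition Tset where "Tset x = {z. \<exists>p. dwalk E p x z \<and> length p \<le> Suc k}"

lemma D0: "Dset 0 x = {x}"
proof
  show "Dset 0 x \<subseteq> {x}"
  proof
    fix z assume "z \<in> Dset 0 x"
    then obtain p where p: "dwalk E p x z" "length p = 1" by (auto simp: Dset_def)
    then obtain c where "p = [c]" by (cases p) auto
    with p show "z \<in> {x}" by (auto simp: dwalk_def)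
  qed
  show "{x} \<subseteq> Dset 0 x" using dwalk_single by (force simp: Dset_def)
qed

lemma DSuc: "Dset (Suc j) x = (\<Union>z\<in>Dset j x. out_nbrs E z)"
proof
  show "Dset (Suc j) x \<subseteq> (\<Union>z\<in>Dset j x. out_nbrs E z)"
  proof
    fix z assume "z \<in> Dset (Suc j) x"
    then obtain p where p: "dwalk E p x z" "length p = Suc (Suc j)" by (auto simp: Dset_def)
    define b where "b = butlast p"
    have ne: "p \<noteq> []" using p by auto
    have pb: "p = b @ [last p]" using ne by (simp add: b_def)
    have lb: "length b = Suc j" using p by (simp add: b_def)
    then have bne: "b \<noteq> []" by auto
    from dwalk_snocD[of E b "last p" x z] p(1) pb bne
    have "dwalk E b x (last b) \<and> E (last b) (last p) \<and> z = last p" by metis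
    then show "z \<in> (\<Union>z\<in>Dset j x. out_nbrs E z)" using lb by (auto simp: Dset_def)
  qed
  show "(\<Union>z\<in>Dset j x. out_nbrs E z) \<subseteq> Dset (Suc j) x"
  proof
    fix w assume "w \<in> (\<Union>z\<in>Dset j x. out_nbrs E z)"
    then obtain z p where "dwalk E p x z" "length p = Suc j" "E z w" by (auto simp: Dset_def)
    then show "w \<in> Dset (Suc j) x" using dwalk_snoc by (fastforce simp: Dset_def)
  qed
qed

lemma D_sub: "x \<in> V \<Longrightarrow> Dset j x \<subseteq> V"
  using dwalk_last_V by (auto simp: Dset_def)

lemma fin_D: "x \<in> V \<Longrightarrow> finite (Dset j x)"
  using D_sub finV finite_subset by blast

lemma card_D: "x \<in> V \<Longrightarrow> j \<le> k \<Longrightarrow> card (Dset j x) = 2^j"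
proof (induction j)
  case 0 then show ?case by (simp add: D0)
next
  case (Suc j)
  have IH: "card (Dset j x) = 2^j" using Suc by simp
  have disj: "\<forall>z1\<in>Dset j x. \<forall>z2\<in>Dset j x. z1 \<noteq> z2 \<longrightarrow> out_nbrs E z1 \<inter> out_nbrs E z2 = {}"
  proof (intro ballI impI)
    fix z1 z2 assume z: "z1 \<in> Dset j x" "z2 \<in> Dset j x" "z1 \<noteq> z2"
    show "out_nbrs E z1 \<inter> out_nbrs E z2 = {}"
    proof (rule ccontr)
      assume "out_nbrs E z1 \<inter> out_nbrs E z2 \<noteq> {}"
      then obtain w where w: "E z1 w" "E z2 w" by auto
      obtain p1 where p1: "dwalk E p1 x z1" "length p1 = Suc j" using z by (auto simp: Dset_def)
      obtain p2 where p2: "dwalk E p2 x z2" "length p2 = Suc j" using z by (auto simp: Dset_def)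
      have "p1 @ [w] = p2 @ [w]"
        using uniq[OF dwalk_snoc[OF p1(1) w(1)] dwalk_snoc[OF p2(1) w(2)]] p1 p2 Suc by simp
      then have "p1 = p2" by simp
      then show False using p1 p2 z(3) by (auto simp: dwalk_def)
    qed
  qed
  have "card (Dset (Suc j) x) = (\<Sum>z\<in>Dset j x. card (out_nbrs E z))"
    unfolding DSuc by (rule card_UN_disjoint[OF fin_D[OF Suc.prems(1)]]) (use fin_out disj in auto)
  also have "\<dots> = (\<Sum>z\<in>Dset j x. 2)"
    using D_sub[OF Suc.prems(1)] outd by (intro sum.cong) auto
  also have "\<dots> = 2^Suc j" using IH by simp
  finally show ?case .
qed

lemma T_eq: "Tset x = (\<Union>j\<in>{..k}. Dset j x)"
proof
  show "Tset x \<subseteq> (\<Union>j\<in>{..k}. Dset j x)"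
  proof
    fix z assume "z \<in> Tset x"
    then obtain p where p: "dwalk E p x z" "length p \<le> Suc k" by (auto simp: Tset_def)
    then have "p \<noteq> []" by (simp add: dwalk_def)
    then have "length p = Suc (length p - 1)" by simp
    then show "z \<in> (\<Union>j\<in>{..k}. Dset j x)" using p
      by (auto simp: Dset_def intro!: bexI[of _ "length p - 1"])
  qed
  show "(\<Union>j\<in>{..k}. Dset j x) \<subseteq> Tset x" by (auto simp: Dset_def Tset_def)
qed

lemma T_sub: "x \<in> V \<Longrightarrow> Tset x \<subseteq> V"
  using dwalk_last_V by (auto simp: Tset_def)

lemma card_T: "x \<in> V \<Longrightarrow> card (Tset x) = moore_bound 2 k"
proof -
  assume x: "x \<in> V"
  have disj: "\<forall>i\<in>{..k}. \<forall>j\<in>{..k}. i \<noteq> j \<longrightarrow> Dset i x \<inter> Dset j x = {}"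
  proof (intro ballI impI)
    fix i j assume ij: "i \<in> {..k}" "j \<in> {..k}" "i \<noteq> j"
    show "Dset i x \<inter> Dset j x = {}"
    proof (rule ccontr)
      assume "Dset i x \<inter> Dset j x \<noteq> {}"
      then obtain z p q where "dwalk E p x z" "length p = Suc i" "dwalk E q x z" "length q = Suc j"
        by (auto simp: Dset_def)
      with uniq[of p x z q] ij x show False by auto
    qed
  qed
  have "card (Tset x) = (\<Sum>j\<in>{..k}. card (Dset j x))"
    unfolding T_eq by (rule card_UN_disjoint) (use fin_D[OF x] disj in auto)
  also have "\<dots> = (\<Sum>j\<in>{..k}. 2^j)" using card_D[OF x] by (intro sum.cong) auto
  finally show ?thesis by (simp add: moore_bound_def)
qed

lemma L3: assumes "a \<in> V" "b \<in> V" "a \<noteq> b" "in_nbrs E a = in_nbrs E b" "out_nbrs E a = out_nbrs E b"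
  shows False
proof -
  obtain p where p: "E p a" using nonempty2[OF ind[OF assms(1)]] by auto
  obtain m where m: "E a m" using nonempty2[OF outd[OF assms(1)]] by auto
  have pb: "E p b" using p assms(4) by (metis mem_in)
  have bm: "E b m" using m assms(5) by (metis mem_out)
  have pV: "p \<in> V" using arcV p by blast
  have "[p,a,m] = [p,b,m]" by (rule uniq[OF w3[OF p m] w3[OF pb bm]]) (use k3 pV in auto)
  then show False using assms(3) by simp
qed

lemma L1: assumes "a \<in> V" "a \<noteq> b" "out_nbrs E a = out_nbrs E b" "dwalk E P a b" "length P \<le> Suc k"
  shows False
proof -
  obtain P' where P: "P = a # P'" using assms(4) by (cases P) (auto simp: dwalk_def)
  have ne: "P' \<noteq> []" using assms(2,4) P by (auto simp: dwalk_def)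
  from dwalk_ConsD[OF assms(4)[unfolded P] ne]
  have c: "E a (hd P')" "dwalk E P' (hd P') b" by auto
  have "E b (hd P')" using c(1) assms(3) by (metis mem_out)
  from dwalk_snoc[OF c(2) this] have "dwalk E (P' @ [hd P']) (hd P') (hd P')" .
  moreover have "2 \<le> length (P' @ [hd P'])" using ne by (cases P') auto
  moreover have "length (P' @ [hd P']) \<le> Suc k" using assms(5) P by simp
  moreover have "hd P' \<in> V" using arcV c(1) by blast
  ultimately show False by (rule closed)
qed

lemma extw: assumes "dwalk E P a b" "a \<noteq> b" "in_nbrs E b = in_nbrs E c"
  shows "\<exists>P'. dwalk E P' a c \<and> length P' = length P \<and> 2 \<le> length P"
proof -
  have bas: "P \<noteq> [] \<and> hd P = a \<and> last P = b" using assms(1) unfolding dwalk_def by blast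
  then have ne: "P \<noteq> []" and hP: "hd P = a" and lP: "last P = b" by auto
  define B where "B = butlast P"
  have PB: "P = B @ [b]" unfolding B_def lP[symmetric] by (rule sym[OF append_butlast_last_id[OF ne]])
  have Bne: "B \<noteq> []"
  proof
    assume "B = []"
    then have "P = [b]" using PB by simp
    then have "hd P = b" by simp
    then show False using hP assms(2) by simp
  qed
  have W: "dwalk E (B @ [b]) a b" using assms(1) unfolding PB[symmetric] .
  have D: "dwalk E B a (last B) \<and> E (last B) b \<and> b = b" by (rule dwalk_snocD[OF W Bne])
  have "E (last B) b" using D by blast
  then have "last B \<in> in_nbrs E c" unfolding assms(3)[symmetric] mem_in .
  then have Ec: "E (last B) c" by simp
  have "dwalk E (B @ [c]) a c" by (rule dwalk_snoc[OF conjunct1[OF D] Ec])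
  moreover have "2 \<le> length P" using PB Bne by (cases B) auto
  moreover have "length (B @ [c]) = length P" using PB by simp
  ultimately show ?thesis by blast
qed

end

locale kg2 = kg +
  assumes noone: "\<And>u v. u \<in> V \<Longrightarrow> v \<in> V \<Longrightarrow> u \<noteq> v \<Longrightarrow> card (out_nbrs E u \<inter> out_nbrs E v) \<noteq> 1"
    and cardV: "card V = moore_bound 2 k + 3"
begin

lemma share: assumes "u \<in> V" "v \<in> V" "u \<noteq> v" "E u w" "E v w"
  shows "out_nbrs E u = out_nbrs E v"
proof -
  let ?I = "out_nbrs E u \<inter> out_nbrs E v"
  have fI: "finite ?I" using fin_out by auto
  have "w \<in> ?I" using assms by simp
  then have "card ?I \<noteq> 0" using fI by auto
  moreover have "card ?I \<noteq> 1" using noone assms by blast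
  moreover have "card ?I \<le> 2" using card_mono[OF fin_out, of ?I u] outd[OF assms(1)] by auto
  ultimately have c2: "card ?I = 2" by linarith
  have "?I = out_nbrs E u" using card_subset_eq[OF fin_out, of ?I u] c2 outd[OF assms(1)] by auto
  moreover have "?I = out_nbrs E v" using card_subset_eq[OF fin_out, of ?I v] c2 outd[OF assms(2)] by auto
  ultimately show ?thesis by simp
qed

lemma twin: assumes "e \<in> V" shows "\<exists>f\<in>V. f \<noteq> e \<and> out_nbrs E f = out_nbrs E e"
proof -
  obtain m where m: "E e m" using nonempty2[OF outd[OF assms]] by auto
  have mV: "m \<in> V" using arcV m by blast
  obtain f where f: "f \<noteq> e" "in_nbrs E m = {e, f}"
    using two_elem[OF fin_in ind[OF mV], of e] m by auto
  have fm: "E f m" using f(2) by (metis insertI1 insert_commute mem_in)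
  have fV: "f \<in> V" using arcV fm by blast
  show ?thesis using share[OF fV assms f(1) fm m] fV f(1) by blast
qed

lemma itwin: assumes "x \<in> V" shows "\<exists>q\<in>V. q \<noteq> x \<and> in_nbrs E q = in_nbrs E x"
proof -
  obtain p where p: "E p x" using nonempty2[OF ind[OF assms]] by auto
  have pV: "p \<in> V" using arcV p by blast
  obtain q where q: "q \<noteq> x" "out_nbrs E p = {x, q}"
    using two_elem[OF fin_out outd[OF pV], of x] p by auto
  have pq: "E p q" using q(2) by (metis insertI1 insert_commute mem_out)
  have qV: "q \<in> V" using arcV pq by blast
  have sub: "in_nbrs E x \<subseteq> in_nbrs E q"
  proof
    fix p' assume "p' \<in> in_nbrs E x"
    then have p': "E p' x" by simp
    show "p' \<in> in_nbrs E q"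
    proof (cases "p' = p")
      case True then show ?thesis using pq by simp
    next
      case False
      have "out_nbrs E p' = out_nbrs E p" using share[OF _ pV False p' p] arcV p' by blast
      then show ?thesis using pq by (metis mem_in mem_out)
    qed
  qed
  have "in_nbrs E x = in_nbrs E q"
    using card_subset_eq[OF fin_in sub] ind[OF assms] ind[OF qV] by simp
  then show ?thesis using qV q(1) by auto
qed


lemma contra: False
proof -
  have "card V \<noteq> 0" using cardV by simp
  then obtain x where x: "x \<in> V" using finV by fastforce
  obtain e where xe: "E x e" using nonempty2[OF outd[OF x]] by auto
  obtain e' where e': "e' \<noteq> e" "out_nbrs E x = {e, e'}"
    using two_elem[OF fin_out outd[OF x], of e] xe by auto
  have xe': "E x e'" using e'(2) by (metis insertI1 insert_commute mem_out)
  have eV: "e \<in> V" and e'V: "e' \<in> V" using arcV xe xe' by auto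
  obtain f where fV: "f \<in> V" and fe: "f \<noteq> e" and Nf: "out_nbrs E f = out_nbrs E e"
    using twin[OF eV] by blast
  obtain y where yV: "y \<in> V" and yx: "y \<noteq> x" and Ny: "out_nbrs E y = out_nbrs E x"
    using twin[OF x] by blast
  obtain q where qV: "q \<in> V" and qx: "q \<noteq> x" and Nq: "in_nbrs E q = in_nbrs E x"
    using itwin[OF x] by blast
  obtain r where rV: "r \<in> V" and ry: "r \<noteq> y" and Nr: "in_nbrs E r = in_nbrs E y"
    using itwin[OF yV] by blast
  obtain m where em: "E e m" using nonempty2[OF outd[OF eV]] by auto
  have fm: "E f m" using em Nf by (metis mem_out)
  obtain p where px: "E p x" using nonempty2[OF ind[OF x]] by auto
  obtain py where pyy: "E py y" using nonempty2[OF ind[OF yV]] by auto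
  have pV: "p \<in> V" and pyV: "py \<in> V" using arcV px pyy by auto
  have ye: "E y e" using xe Ny by (metis mem_out)
  have k1: "4 \<le> Suc k" using k3 by simp
  have yT: "y \<notin> Tset x"
  proof
    assume "y \<in> Tset x"
    then obtain P where "dwalk E P x y" "length P \<le> Suc k" by (auto simp: Tset_def)
    then show False using L1[OF x yx[symmetric] Ny[symmetric]] by blast
  qed
  have qT: "q \<notin> Tset x"
  proof
    assume "q \<in> Tset x"
    then obtain P where P: "dwalk E P x q" "length P \<le> Suc k" by (auto simp: Tset_def)
    obtain P' where P': "dwalk E P' x x" "length P' = length P" "2 \<le> length P"
      using extw[OF P(1) qx[symmetric] Nq] by blast
    show False using closed[OF P'(1)] P'(2,3) P(2) x by simp
  qed
  have rx: "r \<noteq> x"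
  proof
    assume "r = x"
    then have "in_nbrs E x = in_nbrs E y" using Nr by simp
    then show False using L3[OF x yV yx[symmetric]] Ny by simp
  qed
  have rT: "r \<notin> Tset x"
  proof
    assume "r \<in> Tset x"
    then obtain P where P: "dwalk E P x r" "length P \<le> Suc k" by (auto simp: Tset_def)
    obtain P' where P': "dwalk E P' x y" "length P' = length P"
      using extw[OF P(1) rx[symmetric] Nr] by blast
    then have "y \<in> Tset x" using P(2) by (auto simp: Tset_def)
    then show False using yT by simp
  qed
  have yq: "y \<noteq> q"
  proof
    assume "y = q"
    then show False using L3[OF x yV yx[symmetric]] Ny Nq by simp
  qed
  have qr: "q \<noteq> r"
  proof
    assume "q = r"
    then have "in_nbrs E x = in_nbrs E y" using Nq Nr by simp
    then show False using L3[OF x yV yx[symmetric]] Ny by simp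
  qed
  have c3: "card {y, q, r} = 3" using yq qr ry by simp
  have sub3: "{y, q, r} \<subseteq> V - Tset x" using yT qT rT yV qV rV by auto
  have cVT: "card (V - Tset x) = 3"
    using card_Diff_subset[OF finite_subset[OF T_sub[OF x] finV] T_sub[OF x]] card_T[OF x] cardV by simp
  have VT: "V - Tset x = {y, q, r}"
    using card_subset_eq[OF finite_Diff[OF finV] sub3] c3 cVT by simp
  have outl: "z \<in> V \<Longrightarrow> z \<notin> Tset x \<Longrightarrow> z = y \<or> z = q \<or> z = r" for z
    using VT by blast
  have noee: "\<not> E e e" using noloop by blast
  have fy: "f \<noteq> y"
  proof
    assume "f = y"
    then have "E e e" using Nf Ny xe by (metis mem_out)
    then show False using noee by simp
  qed
  have fq: "f \<noteq> q"
  proof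
    assume "f = q"
    then have pf: "E p f" using Nq px by (metis mem_in)
    have "[p,x,e,m] = [p,f,m]" by (rule uniq[OF w4[OF px xe em] w3[OF pf fm]]) (use k1 pV in auto)
    then show False by simp
  qed
  have fr: "f \<noteq> r"
  proof
    assume "f = r"
    then have pf: "E py f" using Nr pyy by (metis mem_in)
    have "[py,y,e,m] = [py,f,m]" by (rule uniq[OF w4[OF pyy ye em] w3[OF pf fm]]) (use k1 pyV in auto)
    then show False by simp
  qed
  have "f \<in> Tset x" using outl[OF fV] fy fq fr by blast
  then obtain P where P: "dwalk E P x f" "length P \<le> Suc k" by (auto simp: Tset_def)
  have fx: "f \<noteq> x"
  proof
    assume "f = x"
    then have "E e e" using Nf xe by (metis mem_out)
    then show False using noee by simp
  qed
  obtain P' where PP: "P = x # P'" using P(1) by (cases P) (auto simp: dwalk_def)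
  have P'ne: "P' \<noteq> []" using P(1) PP fx by (auto simp: dwalk_def)
  have DC: "x = x \<and> E x (hd P') \<and> dwalk E P' (hd P') f"
    using dwalk_ConsD[of E x P' x f] P(1) PP P'ne by simp
  have hd_cases: "hd P' = e \<or> hd P' = e'" using DC e'(2) by (metis insertE mem_out singletonD)
  have hdP': "hd P' = e'"
  proof (rule ccontr)
    assume "hd P' \<noteq> e'"
    then have "hd P' = e" using hd_cases by simp
    then have "dwalk E P' e f" using DC by simp
    moreover have "length P' \<le> Suc k" using P(2) PP by simp
    ultimately show False using L1[OF eV fe[symmetric] Nf[symmetric]] by blast
  qed
  have WP': "dwalk E P' e' f" using DC hdP' by simp
  have lenP: "length P = Suc k"
  proof (rule ccontr)
    assume "length P \<noteq> Suc k"
    then have "length (P @ [m]) \<le> Suc k" using P(2) by simp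
    then have "[x,e,m] = P @ [m]"
      using uniq[OF w3[OF xe em] dwalk_snoc[OF P(1) fm]] k1 x by simp
    then have "[e,m] = P' @ [m]" using PP by simp
    then have "P' = [e]" by (cases P') auto
    then show False using hdP' e'(1) by simp
  qed
  define B where "B = butlast P"
  have lP: "last P = f" using P(1) by (simp add: dwalk_def)
  have Pne: "P \<noteq> []" using PP by simp
  have PB: "P = B @ [f]" unfolding B_def lP[symmetric] by (rule sym[OF append_butlast_last_id[OF Pne]])
  have Bne: "B \<noteq> []" using lenP k3 PB by (cases B) auto
  have W: "dwalk E (B @ [f]) x f" using P(1) unfolding PB[symmetric] .
  have DB: "dwalk E B x (last B) \<and> E (last B) f \<and> f = f" by (rule dwalk_snocD[OF W Bne])
  have fV2: "f \<in> V" by (rule fV)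
  obtain h where h: "h \<noteq> last B" "in_nbrs E f = {last B, h}"
    using two_elem[OF fin_in ind[OF fV], of "last B"] DB by auto
  have hf: "E h f" using h(2) by (metis insertI1 insert_commute mem_in)
  have hV: "h \<in> V" using arcV hf by blast
  have hT: "h \<notin> Tset x"
  proof
    assume "h \<in> Tset x"
    then obtain Q where Q: "dwalk E Q x h" "length Q \<le> Suc k" by (auto simp: Tset_def)
    have WQ: "dwalk E (Q @ [f]) x f" by (rule dwalk_snoc[OF Q(1) hf])
    have Qne: "Q \<noteq> []" using Q(1) by (simp add: dwalk_def)
    have lQ: "last Q = h" using Q(1) by (simp add: dwalk_def)
    show False
    proof (cases "length Q \<le> k")
      case True
      then have "Q @ [f] = P" using uniq[OF WQ P(1)] P(2) x by simp
      then have "Q = B" using PB by simp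
      then show False using lQ h(1) by simp
    next
      case False
      then have lQk: "length Q = Suc k" using Q(2) by simp
      obtain Q' where QQ: "Q @ [f] = x # Q'" using Qne Q(1) by (cases Q) (auto simp: dwalk_def)
      have Q'ne: "Q' \<noteq> []" using QQ Qne by (cases Q) auto
      have DQ: "x = x \<and> E x (hd Q') \<and> dwalk E Q' (hd Q') f"
        using dwalk_ConsD[of E x Q' x f] WQ QQ Q'ne by simp
      have lQ': "length Q' = Suc k" using QQ lQk by (metis length_Cons length_append_singleton nat.inject)
      have "hd Q' = e \<or> hd Q' = e'" using DQ e'(2) by (metis insertE mem_out singletonD)
      then show False
      proof
        assume "hd Q' = e"
        then have "dwalk E Q' e f" using DQ by simp
        then show False using L1[OF eV fe[symmetric] Nf[symmetric]] lQ' by force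
      next
        assume "hd Q' = e'"
        then have "dwalk E Q' e' f" using DQ by simp
        then have "Q' = P'" using uniq[OF _ WP'] lQ' PP lenP e'V by simp
        then show False using lQ' PP lenP by simp
      qed
    qed
  qed
  have "h = y \<or> h = q \<or> h = r" using outl[OF hV hT] .
  then show False
  proof (elim disjE)
    assume "h = y"
    then have "E x f" using hf Ny by (metis mem_out)
    then have "[x,f] = P" using uniq[OF w2 P(1)] P(2) x k1 by simp
    then show False using lenP k3 by auto
  next
    assume hq: "h = q"
    then have ph: "E p h" using Nq px by (metis mem_in)
    have "[p,x,e,m] = [p,h,f,m]" by (rule uniq[OF w4[OF px xe em] w4[OF ph hf fm]]) (use k1 pV in auto)
    then show False using hq qx by simp
  next
    assume hr: "h = r"
    then have ph: "E py h" using Nr pyy by (metis mem_in)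
    have "[py,y,e,m] = [py,h,f,m]" by (rule uniq[OF w4[OF pyy ye em] w4[OF ph hf fm]]) (use k1 pyV in auto)
    then show False using hr ry by simp
  qed
qed

end

theorem theorem2:
  fixes V :: "'a set" and E :: "'a \<Rightarrow> 'a \<Rightarrow> bool" and k :: nat
  assumes "k \<ge> 3"
    and "diregular_dk_eps V E 2 k 3"
  shows "\<exists>u\<in>V. \<exists>v\<in>V. u \<noteq> v \<and> card (out_nbrs E u \<inter> out_nbrs E v) = 1"
proof (rule ccontr)
  assume neg: "\<not> ?thesis"
  interpret kg2 V E k
  proof
    show "digraph V E" "k_geodetic V E k" using assms(2) by (auto simp: diregular_dk_eps_def)
    show "\<And>x. x \<in> V \<Longrightarrow> card (out_nbrs E x) = 2" "\<And>x. x \<in> V \<Longrightarrow> card (in_nbrs E x) = 2"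
      using assms(2) by (auto simp: diregular_dk_eps_def)
    show "3 \<le> k" using assms(1) .
    show "\<And>u v. u \<in> V \<Longrightarrow> v \<in> V \<Longrightarrow> u \<noteq> v \<Longrightarrow> card (out_nbrs E u \<inter> out_nbrs E v) \<noteq> 1"
      using neg by blast
    show "card V = moore_bound 2 k + 3" using assms(2) by (simp add: diregular_dk_eps_def)
  qed
  show False by (rule contra)
qed

end
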